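(* Let $U\colon\mathcal D\to\mathcal C$ be a strong monoidal functor between left closed monoidal categories. If $U$ is conservative and left closed, and $\mathcal C$ is left autonomous, then $\mathcal D$ is left autonomous.
   Context: Monoidal categories are strict. A monoidal category is left closed if for every object $X$ the functor $?\otimes X$ has a right adjoint $[X,?]^l$, with counit $\mathrm{ev}^X_Y\colon [X,Y]^l\otimes X\to Y$. A strong monoidal functor $U$ with structure isomorphisms $U_2(A,B)\colon UA\otimes UB\to U(A\otimes B)$, $U_0\colon\mathbb 1\to U\mathbb 1$ between left closed monoidal categories is left closed if for all $X,Y$ the morphism $U^l_{X,Y}\colon U[X,Y]^l\to[UX,UY]^l$ corresponding by adjunction to $U(\mathrm{ev}^X_Y)U_2([X,Y]^l,X)$ is an isomorphism. Left autonomous means every object $X$ has a left dual ${}^\vee X$ with $\mathrm{ev}_X\colon{}^\vee X\otimes X\to\mathbb 1$, $\mathrm{coev}_X\colon\mathbb 1\to X\otimes{}^\vee X$ satisfying the zigzag identities. Conservative means reflecting isomorphisms. *)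

theory Defs
  imports Main
begin

text \<open>A (strict) left closed monoidal category, given explicitly as data:
objects, arrows with domain/codomain, identities, composition
(cComp g f = g after f), tensor on objects and arrows, unit,
and the chosen internal homs [X,Y]^l (cHom X Y) with counits ev^X_Y (cEv X Y).\<close>

record ('o, 'm) lcmc =
  cObj  :: "'o set"
  cArr  :: "'m set"
  cDom  :: "'m \<Rightarrow> 'o"
  cCod  :: "'m \<Rightarrow> 'o"
  cId   :: "'o \<Rightarrow> 'm"
  cComp :: "'m \<Rightarrow> 'm \<Rightarrow> 'm"
  cTen  :: "'o \<Rightarrow> 'o \<Rightarrow> 'o"
  cTenA :: "'m \<Rightarrow> 'm \<Rightarrow> 'm"
  cUnit :: "'o"
  cHom  :: "'o \<Rightarrow> 'o \<Rightarrow> 'o"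
  cEv   :: "'o \<Rightarrow> 'o \<Rightarrow> 'm"

definition hom :: "('o, 'm, 'z) lcmc_scheme \<Rightarrow> 'o \<Rightarrow> 'o \<Rightarrow> 'm set" where
  "hom C a b = {f \<in> cArr C. cDom C f = a \<and> cCod C f = b}"

definition category :: "('o, 'm, 'z) lcmc_scheme \<Rightarrow> bool" where
  "category C \<longleftrightarrow>
     (\<forall>f\<in>cArr C. cDom C f \<in> cObj C \<and> cCod C f \<in> cObj C) \<and>
     (\<forall>a\<in>cObj C. cId C a \<in> hom C a a) \<and>
     (\<forall>f\<in>cArr C. \<forall>g\<in>cArr C. cCod C f = cDom C g \<longrightarrow>
         cComp C g f \<in> hom C (cDom C f) (cCod C g)) \<and>
     (\<forall>f\<in>cArr C. cComp C (cId C (cCod C f)) f = f \<and> cComp C f (cId C (cDom C f)) = f) \<and>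
     (\<forall>f\<in>cArr C. \<forall>g\<in>cArr C. \<forall>h\<in>cArr C. cCod C f = cDom C g \<longrightarrow> cCod C g = cDom C h \<longrightarrow>
         cComp C h (cComp C g f) = cComp C (cComp C h g) f)"

definition iso :: "('o, 'm, 'z) lcmc_scheme \<Rightarrow> 'm \<Rightarrow> bool" where
  "iso C f \<longleftrightarrow> f \<in> cArr C \<and>
     (\<exists>g \<in> hom C (cCod C f) (cDom C f).
        cComp C g f = cId C (cDom C f) \<and> cComp C f g = cId C (cCod C f))"

definition strict_monoidal :: "('o, 'm, 'z) lcmc_scheme \<Rightarrow> bool" where
  "strict_monoidal C \<longleftrightarrow> category C \<and>
     cUnit C \<in> cObj C \<and>
     (\<forall>a\<in>cObj C. \<forall>b\<in>cObj C. cTen C a b \<in> cObj C) \<and>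
     (\<forall>f\<in>cArr C. \<forall>g\<in>cArr C.
        cTenA C f g \<in> hom C (cTen C (cDom C f) (cDom C g)) (cTen C (cCod C f) (cCod C g))) \<and>
     (\<forall>a\<in>cObj C. \<forall>b\<in>cObj C. cTenA C (cId C a) (cId C b) = cId C (cTen C a b)) \<and>
     (\<forall>f\<in>cArr C. \<forall>f'\<in>cArr C. \<forall>g\<in>cArr C. \<forall>g'\<in>cArr C.
        cCod C f = cDom C f' \<longrightarrow> cCod C g = cDom C g' \<longrightarrow>
        cTenA C (cComp C f' f) (cComp C g' g) = cComp C (cTenA C f' g') (cTenA C f g)) \<and>
     (\<forall>a\<in>cObj C. \<forall>b\<in>cObj C. \<forall>c\<in>cObj C.
        cTen C (cTen C a b) c = cTen C a (cTen C b c)) \<and>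
     (\<forall>f\<in>cArr C. \<forall>g\<in>cArr C. \<forall>h\<in>cArr C.
        cTenA C (cTenA C f g) h = cTenA C f (cTenA C g h)) \<and>
     (\<forall>a\<in>cObj C. cTen C (cUnit C) a = a \<and> cTen C a (cUnit C) = a) \<and>
     (\<forall>f\<in>cArr C. cTenA C (cId C (cUnit C)) f = f \<and> cTenA C f (cId C (cUnit C)) = f)"

text \<open>Left closed: (cHom X Y, cEv X Y) is a universal arrow from  ? \<otimes> X  to Y,
i.e. ? \<otimes> X is left adjoint to [X,?]^l with counit ev^X.\<close>
definition left_closed :: "('o, 'm, 'z) lcmc_scheme \<Rightarrow> bool" where
  "left_closed C \<longleftrightarrow> strict_monoidal C \<and>
     (\<forall>X\<in>cObj C. \<forall>Y\<in>cObj C.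
        cHom C X Y \<in> cObj C \<and>
        cEv C X Y \<in> hom C (cTen C (cHom C X Y) X) Y \<and>
        (\<forall>Z\<in>cObj C. \<forall>f\<in>hom C (cTen C Z X) Y.
           \<exists>!g. g \<in> hom C Z (cHom C X Y) \<and> cComp C (cEv C X Y) (cTenA C g (cId C X)) = f))"

definition left_autonomous :: "('o, 'm, 'z) lcmc_scheme \<Rightarrow> bool" where
  "left_autonomous C \<longleftrightarrow> strict_monoidal C \<and>
     (\<forall>X\<in>cObj C. \<exists>Xv e c. Xv \<in> cObj C \<and>
        e \<in> hom C (cTen C Xv X) (cUnit C) \<and>
        c \<in> hom C (cUnit C) (cTen C X Xv) \<and>
        cComp C (cTenA C (cId C X) e) (cTenA C c (cId C X)) = cId C X \<and>
        cComp C (cTenA C e (cId C Xv)) (cTenA C (cId C Xv) c) = cId C Xv)"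

text \<open>A functor together with monoidal structure maps U_2(A,B) and U_0.\<close>
record ('o1, 'm1, 'o2, 'm2) mfun =
  fObj  :: "'o1 \<Rightarrow> 'o2"
  fArr  :: "'m1 \<Rightarrow> 'm2"
  fTwo  :: "'o1 \<Rightarrow> 'o1 \<Rightarrow> 'm2"
  fZero :: "'m2"

definition is_functor ::
  "('o1, 'm1, 'z1) lcmc_scheme \<Rightarrow> ('o2, 'm2, 'z2) lcmc_scheme \<Rightarrow> ('o1, 'm1, 'o2, 'm2, 'z3) mfun_scheme \<Rightarrow> bool" where
  "is_functor D C U \<longleftrightarrow>
     (\<forall>a\<in>cObj D. fObj U a \<in> cObj C) \<and>
     (\<forall>f\<in>cArr D. fArr U f \<in> hom C (fObj U (cDom D f)) (fObj U (cCod D f))) \<and>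
     (\<forall>a\<in>cObj D. fArr U (cId D a) = cId C (fObj U a)) \<and>
     (\<forall>f\<in>cArr D. \<forall>g\<in>cArr D. cCod D f = cDom D g \<longrightarrow>
        fArr U (cComp D g f) = cComp C (fArr U g) (fArr U f))"

definition strong_monoidal_functor ::
  "('o1, 'm1, 'z1) lcmc_scheme \<Rightarrow> ('o2, 'm2, 'z2) lcmc_scheme \<Rightarrow> ('o1, 'm1, 'o2, 'm2, 'z3) mfun_scheme \<Rightarrow> bool" where
  "strong_monoidal_functor D C U \<longleftrightarrow>
     strict_monoidal D \<and> strict_monoidal C \<and> is_functor D C U \<and>
     (\<forall>A\<in>cObj D. \<forall>B\<in>cObj D.
        fTwo U A B \<in> hom C (cTen C (fObj U A) (fObj U B)) (fObj U (cTen D A B)) \<and>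
        iso C (fTwo U A B)) \<and>
     fZero U \<in> hom C (cUnit C) (fObj U (cUnit D)) \<and> iso C (fZero U) \<and>
     (\<forall>f\<in>cArr D. \<forall>g\<in>cArr D.
        cComp C (fTwo U (cCod D f) (cCod D g)) (cTenA C (fArr U f) (fArr U g))
        = cComp C (fArr U (cTenA D f g)) (fTwo U (cDom D f) (cDom D g))) \<and>
     (\<forall>A\<in>cObj D. \<forall>B\<in>cObj D. \<forall>E\<in>cObj D.
        cComp C (fTwo U (cTen D A B) E) (cTenA C (fTwo U A B) (cId C (fObj U E)))
        = cComp C (fTwo U A (cTen D B E)) (cTenA C (cId C (fObj U A)) (fTwo U B E))) \<and>
     (\<forall>A\<in>cObj D.
        cComp C (fTwo U (cUnit D) A) (cTenA C (fZero U) (cId C (fObj U A))) = cId C (fObj U A) \<and>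
        cComp C (fTwo U A (cUnit D)) (cTenA C (cId C (fObj U A)) (fZero U)) = cId C (fObj U A))"

definition closed_comparison ::
  "('o1, 'm1, 'z1) lcmc_scheme \<Rightarrow> ('o2, 'm2, 'z2) lcmc_scheme \<Rightarrow> ('o1, 'm1, 'o2, 'm2, 'z3) mfun_scheme
   \<Rightarrow> 'o1 \<Rightarrow> 'o1 \<Rightarrow> 'm2" where
  "closed_comparison D C U X Y =
     (THE g. g \<in> hom C (fObj U (cHom D X Y)) (cHom C (fObj U X) (fObj U Y)) \<and>
        cComp C (cEv C (fObj U X) (fObj U Y)) (cTenA C g (cId C (fObj U X)))
        = cComp C (fArr U (cEv D X Y)) (fTwo U (cHom D X Y) X))"

definition left_closed_functor ::
  "('o1, 'm1, 'z1) lcmc_scheme \<Rightarrow> ('o2, 'm2, 'z2) lcmc_scheme \<Rightarrow> ('o1, 'm1, 'o2, 'm2, 'z3) mfun_scheme \<Rightarrow> bool" where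
  "left_closed_functor D C U \<longleftrightarrow>
     (\<forall>X\<in>cObj D. \<forall>Y\<in>cObj D. iso C (closed_comparison D C U X Y))"

definition conservative ::
  "('o1, 'm1, 'z1) lcmc_scheme \<Rightarrow> ('o2, 'm2, 'z2) lcmc_scheme \<Rightarrow> ('o1, 'm1, 'o2, 'm2, 'z3) mfun_scheme \<Rightarrow> bool" where
  "conservative D C U \<longleftrightarrow> (\<forall>f\<in>cArr D. iso C (fArr U f) \<longrightarrow> iso D f)"

end

theory Submission
  imports Defs
begin

locale smc = fixes C :: "('o,'m,'z) lcmc_scheme"
  assumes sm: "strict_monoidal C"
begin
abbreviation cmp (infixr "\<cdot>" 55) where "g \<cdot> f \<equiv> cComp C g f"
abbreviation tA (infixr "\<otimes>" 60) where "f \<otimes> g \<equiv> cTenA C f g"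
abbreviation tO (infixr "\<odot>" 60) where "a \<odot> b \<equiv> cTen C a b"
abbreviation I where "I \<equiv> cUnit C"
abbreviation idd where "idd a \<equiv> cId C a"
abbreviation H where "H a b \<equiv> hom C a b"

lemma smp: "category C" "cUnit C \<in> cObj C"
  "\<forall>a\<in>cObj C. \<forall>b\<in>cObj C. cTen C a b \<in> cObj C"
  "\<forall>f\<in>cArr C. \<forall>g\<in>cArr C.
        cTenA C f g \<in> hom C (cTen C (cDom C f) (cDom C g)) (cTen C (cCod C f) (cCod C g))"
  "\<forall>a\<in>cObj C. \<forall>b\<in>cObj C. cTenA C (cId C a) (cId C b) = cId C (cTen C a b)"
  "\<forall>f\<in>cArr C. \<forall>f'\<in>cArr C. \<forall>g\<in>cArr C. \<forall>g'\<in>cArr C.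
        cCod C f = cDom C f' \<longrightarrow> cCod C g = cDom C g' \<longrightarrow>
        cTenA C (cComp C f' f) (cComp C g' g) = cComp C (cTenA C f' g') (cTenA C f g)"
  "\<forall>a\<in>cObj C. \<forall>b\<in>cObj C. \<forall>c\<in>cObj C.
        cTen C (cTen C a b) c = cTen C a (cTen C b c)"
  "\<forall>f\<in>cArr C. \<forall>g\<in>cArr C. \<forall>h\<in>cArr C.
        cTenA C (cTenA C f g) h = cTenA C f (cTenA C g h)"
  "\<forall>a\<in>cObj C. cTen C (cUnit C) a = a \<and> cTen C a (cUnit C) = a"
  "\<forall>f\<in>cArr C. cTenA C (cId C (cUnit C)) f = f \<and> cTenA C f (cId C (cUnit C)) = f"
  using sm unfolding strict_monoidal_def by simp_all

lemma catp: "\<forall>f\<in>cArr C. cDom C f \<in> cObj C \<and> cCod C f \<in> cObj C"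
     "\<forall>a\<in>cObj C. cId C a \<in> hom C a a"
     "\<forall>f\<in>cArr C. \<forall>g\<in>cArr C. cCod C f = cDom C g \<longrightarrow>
         cComp C g f \<in> hom C (cDom C f) (cCod C g)"
     "\<forall>f\<in>cArr C. cComp C (cId C (cCod C f)) f = f \<and> cComp C f (cId C (cDom C f)) = f"
     "\<forall>f\<in>cArr C. \<forall>g\<in>cArr C. \<forall>h\<in>cArr C. cCod C f = cDom C g \<longrightarrow> cCod C g = cDom C h \<longrightarrow>
         cComp C h (cComp C g f) = cComp C (cComp C h g) f"
  using smp(1) unfolding category_def by simp_all

lemma hom_Ar: "f \<in> H a b \<Longrightarrow> f \<in> cArr C" unfolding hom_def by simp
lemma hom_dom: "f \<in> H a b \<Longrightarrow> cDom C f = a" unfolding hom_def by simp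
lemma hom_cod: "f \<in> H a b \<Longrightarrow> cCod C f = b" unfolding hom_def by simp
lemma hom_ob: "f \<in> H a b \<Longrightarrow> a \<in> cObj C \<and> b \<in> cObj C"
  using catp(1) unfolding hom_def by auto
lemma Ar_hom: "f \<in> cArr C \<Longrightarrow> f \<in> H (cDom C f) (cCod C f)" unfolding hom_def by simp

lemma unit_ob[simp,intro]: "I \<in> cObj C" using smp(2) .
lemma tO_ob[simp,intro]: "a \<in> cObj C \<Longrightarrow> b \<in> cObj C \<Longrightarrow> a \<odot> b \<in> cObj C"
  using smp(3) by blast
lemma tO_assoc[simp]: "a \<in> cObj C \<Longrightarrow> b \<in> cObj C \<Longrightarrow> c \<in> cObj C \<Longrightarrow> (a \<odot> b) \<odot> c = a \<odot> (b \<odot> c)"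
  using smp(7) by blast
lemma tO_unit[simp]: "a \<in> cObj C \<Longrightarrow> I \<odot> a = a" "a \<in> cObj C \<Longrightarrow> a \<odot> I = a"
  using smp(9) by blast+

lemma id_hom[intro]: "a \<in> cObj C \<Longrightarrow> idd a \<in> H a a" using catp(2) by blast
lemma comp_hom: "f \<in> H a b \<Longrightarrow> g \<in> H b c \<Longrightarrow> g \<cdot> f \<in> H a c"
proof -
  assume f: "f \<in> H a b" and g: "g \<in> H b c"
  have "g \<cdot> f \<in> H (cDom C f) (cCod C g)" using catp(3) hom_Ar[OF f] hom_Ar[OF g] hom_cod[OF f] hom_dom[OF g] by metis
  thus ?thesis using hom_dom[OF f] hom_cod[OF g] by simp
qed
lemma ten_hom: "f \<in> H a b \<Longrightarrow> g \<in> H c d \<Longrightarrow> f \<otimes> g \<in> H (a \<odot> c) (b \<odot> d)"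
proof -
  assume f: "f \<in> H a b" and g: "g \<in> H c d"
  have "f \<otimes> g \<in> H (cDom C f \<odot> cDom C g) (cCod C f \<odot> cCod C g)" using smp(4) hom_Ar[OF f] hom_Ar[OF g] by blast
  thus ?thesis using hom_dom[OF f] hom_cod[OF f] hom_dom[OF g] hom_cod[OF g] by simp
qed

lemma comp_id_l[simp]: "f \<in> H a b \<Longrightarrow> idd b \<cdot> f = f"
  using catp(4) hom_Ar hom_cod by metis
lemma comp_id_r[simp]: "f \<in> H a b \<Longrightarrow> f \<cdot> idd a = f"
  using catp(4) hom_Ar hom_dom by metis
lemma comp_assoc: "f \<in> H a b \<Longrightarrow> g \<in> H b c \<Longrightarrow> h \<in> H c d \<Longrightarrow> h \<cdot> (g \<cdot> f) = (h \<cdot> g) \<cdot> f"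
proof -
  assume f: "f \<in> H a b" and g: "g \<in> H b c" and h: "h \<in> H c d"
  show ?thesis using catp(5) hom_Ar[OF f] hom_Ar[OF g] hom_Ar[OF h] hom_cod[OF f] hom_dom[OF g] hom_cod[OF g] hom_dom[OF h] by metis
qed
lemma ten_id[simp]: "a \<in> cObj C \<Longrightarrow> b \<in> cObj C \<Longrightarrow> idd a \<otimes> idd b = idd (a \<odot> b)"
  using smp(5) by blast
lemma interchange: "f \<in> H a b \<Longrightarrow> f' \<in> H b c \<Longrightarrow> g \<in> H a' b' \<Longrightarrow> g' \<in> H b' c' \<Longrightarrow>
   (f' \<cdot> f) \<otimes> (g' \<cdot> g) = (f' \<otimes> g') \<cdot> (f \<otimes> g)"
proof -
  assume f: "f \<in> H a b" and f': "f' \<in> H b c" and g: "g \<in> H a' b'" and g': "g' \<in> H b' c'"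
  show ?thesis using smp(6) hom_Ar[OF f] hom_Ar[OF g] hom_Ar[OF f'] hom_Ar[OF g'] hom_cod[OF f] hom_dom[OF f'] hom_cod[OF g] hom_dom[OF g'] by metis
qed
lemma tA_assoc: "f \<in> H a b \<Longrightarrow> g \<in> H c d \<Longrightarrow> h \<in> H x y \<Longrightarrow> (f \<otimes> g) \<otimes> h = f \<otimes> (g \<otimes> h)"
  using smp(8) hom_Ar by blast
lemma tA_unit: "f \<in> H a b \<Longrightarrow> idd I \<otimes> f = f" "f \<in> H a b \<Longrightarrow> f \<otimes> idd I = f"
  using smp(10) hom_Ar by blast+

lemma ten_split1: "f \<in> H a b \<Longrightarrow> g \<in> H c d \<Longrightarrow> f \<otimes> g = (f \<otimes> idd d) \<cdot> (idd a \<otimes> g)"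
proof -
  assume f: "f \<in> H a b" and g: "g \<in> H c d"
  have o: "a \<in> cObj C" "b \<in> cObj C" "c \<in> cObj C" "d \<in> cObj C" using f g hom_ob by auto
  have "(f \<otimes> idd d) \<cdot> (idd a \<otimes> g) = (f \<cdot> idd a) \<otimes> (idd d \<cdot> g)"
    by (rule interchange[symmetric]) (use f g o in \<open>auto intro: id_hom\<close>)
  also have "\<dots> = f \<otimes> g" using f g by simp
  finally show ?thesis by simp
qed
lemma ten_split2: "f \<in> H a b \<Longrightarrow> g \<in> H c d \<Longrightarrow> f \<otimes> g = (idd b \<otimes> g) \<cdot> (f \<otimes> idd c)"
proof -
  assume f: "f \<in> H a b" and g: "g \<in> H c d"
  have o: "a \<in> cObj C" "b \<in> cObj C" "c \<in> cObj C" "d \<in> cObj C" using f g hom_ob by auto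
  have "(idd b \<otimes> g) \<cdot> (f \<otimes> idd c) = (idd b \<cdot> f) \<otimes> (g \<cdot> idd c)"
    by (rule interchange[symmetric]) (use f g o in \<open>auto intro: id_hom\<close>)
  also have "\<dots> = f \<otimes> g" using f g by simp
  finally show ?thesis by simp
qed
lemma comp_ten_idr: "f \<in> H a b \<Longrightarrow> g \<in> H b c \<Longrightarrow> x \<in> cObj C \<Longrightarrow> (g \<cdot> f) \<otimes> idd x = (g \<otimes> idd x) \<cdot> (f \<otimes> idd x)"
proof -
  assume f: "f \<in> H a b" and g: "g \<in> H b c" and x: "x \<in> cObj C"
  have "(g \<cdot> f) \<otimes> (idd x \<cdot> idd x) = (g \<otimes> idd x) \<cdot> (f \<otimes> idd x)"
    by (rule interchange[OF f g id_hom[OF x] id_hom[OF x]])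
  moreover have "idd x \<cdot> idd x = idd x" using x by (meson comp_id_l id_hom)
  ultimately show ?thesis by simp
qed
lemma comp_ten_idl: "f \<in> H a b \<Longrightarrow> g \<in> H b c \<Longrightarrow> x \<in> cObj C \<Longrightarrow> idd x \<otimes> (g \<cdot> f) = (idd x \<otimes> g) \<cdot> (idd x \<otimes> f)"
proof -
  assume f: "f \<in> H a b" and g: "g \<in> H b c" and x: "x \<in> cObj C"
  have "(idd x \<cdot> idd x) \<otimes> (g \<cdot> f) = (idd x \<otimes> g) \<cdot> (idd x \<otimes> f)"
    by (rule interchange[OF id_hom[OF x] id_hom[OF x] f g])
  moreover have "idd x \<cdot> idd x = idd x" using x by (meson comp_id_l id_hom)
  ultimately show ?thesis by simp
qed

definition univ :: "'o \<Rightarrow> 'o \<Rightarrow> 'o \<Rightarrow> 'm \<Rightarrow> bool" where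
  "univ A B W e \<longleftrightarrow> W \<in> cObj C \<and> e \<in> H (W \<odot> A) B \<and>
     (\<forall>Z\<in>cObj C. \<forall>f\<in>H (Z \<odot> A) B. \<exists>!g. g \<in> H Z W \<and> e \<cdot> (g \<otimes> idd A) = f)"

lemma univ_uniq: "univ A B W e \<Longrightarrow> g \<in> H Z W \<Longrightarrow> g' \<in> H Z W \<Longrightarrow>
   e \<cdot> (g \<otimes> idd A) = e \<cdot> (g' \<otimes> idd A) \<Longrightarrow> A \<in> cObj C \<Longrightarrow> g = g'"
proof -
  assume u: "univ A B W e" and g: "g \<in> H Z W" and g': "g' \<in> H Z W"
    and eq: "e \<cdot> (g \<otimes> idd A) = e \<cdot> (g' \<otimes> idd A)" and A: "A \<in> cObj C"
  have Z: "Z \<in> cObj C" using g hom_ob by auto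
  have e: "e \<in> H (W \<odot> A) B" using u unfolding univ_def by auto
  have f: "e \<cdot> (g \<otimes> idd A) \<in> H (Z \<odot> A) (B)"
    by (rule comp_hom[OF ten_hom[OF g id_hom[OF A]] e])
  from u Z f have "\<exists>!h. h \<in> H Z W \<and> e \<cdot> (h \<otimes> idd A) = e \<cdot> (g \<otimes> idd A)"
    unfolding univ_def by simp
  then show ?thesis using g g' eq by (metis (no_types, lifting))
qed

lemma univ_ex: "univ A B W e \<Longrightarrow> Z \<in> cObj C \<Longrightarrow> f \<in> H (Z \<odot> A) B \<Longrightarrow>
   \<exists>g. g \<in> H Z W \<and> e \<cdot> (g \<otimes> idd A) = f"
proof -
  assume u: "univ A B W e" and Z: "Z \<in> cObj C" and f: "f \<in> H (Z \<odot> A) B"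
  have "\<forall>Z\<in>cObj C. \<forall>f\<in>H (Z \<odot> A) B. \<exists>!g. g \<in> H Z W \<and> e \<cdot> (g \<otimes> idd A) = f"
    using u unfolding univ_def by (elim conjE)
  hence "\<exists>!g. g \<in> H Z W \<and> e \<cdot> (g \<otimes> idd A) = f" using Z f by simp
  thus ?thesis by (rule ex1_implies_ex)
qed


lemma univ_props: "univ A B W e \<Longrightarrow> W \<in> cObj C \<and> e \<in> H (W \<odot> A) B"
  unfolding univ_def by simp

lemma zig2_from_zig1:
  assumes A: "A \<in> cObj C" and u: "univ A I W e" and k: "k \<in> H I (A \<odot> W)"
    and z1: "(idd A \<otimes> e) \<cdot> (k \<otimes> idd A) = idd A"
  shows "(e \<otimes> idd W) \<cdot> (idd W \<otimes> k) = idd W"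
proof -
  have W: "W \<in> cObj C" and e: "e \<in> H (W \<odot> A) I" using univ_props[OF u] by auto
  have WA: "W \<odot> A \<in> cObj C" using W A by simp
  have t1: "idd W \<otimes> k \<in> H W (W \<odot> A \<odot> W)" using ten_hom[OF id_hom[OF W] k] W A by simp
  have t2: "e \<otimes> idd W \<in> H (W \<odot> A \<odot> W) W" using ten_hom[OF e id_hom[OF W]] W A by simp
  have L: "(e \<otimes> idd W) \<cdot> (idd W \<otimes> k) \<in> H W W" by (rule comp_hom[OF t1 t2])
  have t3: "k \<otimes> idd A \<in> H A (A \<odot> W \<odot> A)" using ten_hom[OF k id_hom[OF A]] W A by simp
  have t4: "idd A \<otimes> e \<in> H (A \<odot> W \<odot> A) A" using ten_hom[OF id_hom[OF A] e] W A by simp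
  have t5: "idd W \<otimes> (k \<otimes> idd A) \<in> H (W \<odot> A) (W \<odot> A \<odot> W \<odot> A)"
    using ten_hom[OF id_hom[OF W] t3] W A by simp
  have t6: "e \<otimes> idd (W \<odot> A) \<in> H (W \<odot> A \<odot> W \<odot> A) (W \<odot> A)"
    using ten_hom[OF e id_hom[OF WA]] W A by simp
  have t7: "idd (W \<odot> A) \<otimes> e \<in> H (W \<odot> A \<odot> W \<odot> A) (W \<odot> A)"
    using ten_hom[OF id_hom[OF WA] e] W A by simp
  have ee1: "e \<cdot> (e \<otimes> idd (W \<odot> A)) = e \<otimes> e"
    using ten_split2[OF e e] tA_unit(1)[OF e] by simp
  have ee2: "e \<cdot> (idd (W \<odot> A) \<otimes> e) = e \<otimes> e"
    using ten_split1[OF e e] tA_unit(2)[OF e] by simp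
  have "e \<cdot> (((e \<otimes> idd W) \<cdot> (idd W \<otimes> k)) \<otimes> idd A)
      = e \<cdot> (((e \<otimes> idd W) \<otimes> idd A) \<cdot> ((idd W \<otimes> k) \<otimes> idd A))"
    using comp_ten_idr[OF t1 t2 A] by simp
  also have "\<dots> = e \<cdot> ((e \<otimes> idd (W \<odot> A)) \<cdot> (idd W \<otimes> (k \<otimes> idd A)))"
    using tA_assoc[OF e id_hom[OF W] id_hom[OF A]] tA_assoc[OF id_hom[OF W] k id_hom[OF A]] W A by simp
  also have "\<dots> = (e \<cdot> (e \<otimes> idd (W \<odot> A))) \<cdot> (idd W \<otimes> (k \<otimes> idd A))"
    by (rule comp_assoc[OF t5 t6 e])
  also have "\<dots> = (e \<cdot> (idd (W \<odot> A) \<otimes> e)) \<cdot> (idd W \<otimes> (k \<otimes> idd A))"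
    using ee1 ee2 by simp
  also have "\<dots> = e \<cdot> ((idd (W \<odot> A) \<otimes> e) \<cdot> (idd W \<otimes> (k \<otimes> idd A)))"
    by (rule comp_assoc[OF t5 t7 e, symmetric])
  also have "\<dots> = e \<cdot> ((idd W \<otimes> (idd A \<otimes> e)) \<cdot> (idd W \<otimes> (k \<otimes> idd A)))"
    using tA_assoc[OF id_hom[OF W] id_hom[OF A] e] W A by simp
  also have "\<dots> = e \<cdot> (idd W \<otimes> ((idd A \<otimes> e) \<cdot> (k \<otimes> idd A)))"
    using comp_ten_idl[OF t3 t4 W] by simp
  also have "\<dots> = e \<cdot> (idd W \<otimes> idd A)" using z1 by simp
  finally have "e \<cdot> (((e \<otimes> idd W) \<cdot> (idd W \<otimes> k)) \<otimes> idd A) = e \<cdot> (idd W \<otimes> idd A)" .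
  then show ?thesis using univ_uniq[OF u L id_hom[OF W] _ A] by simp
qed

lemma iso_intro: "f \<in> H a b \<Longrightarrow> g \<in> H b a \<Longrightarrow> g \<cdot> f = idd a \<Longrightarrow> f \<cdot> g = idd b \<Longrightarrow> iso C f"
  unfolding iso_def using hom_Ar hom_dom hom_cod by metis

lemma iso_inv: "iso C f \<Longrightarrow> f \<in> H a b \<Longrightarrow> \<exists>g. g \<in> H b a \<and> g \<cdot> f = idd a \<and> f \<cdot> g = idd b"
  unfolding iso_def using hom_dom hom_cod by metis

lemma iso_comp:
  assumes f: "f \<in> H a b" and g: "g \<in> H b c" and isf: "iso C f" and isg: "iso C g"
  shows "iso C (g \<cdot> f)"
proof -
  obtain f' where f': "f' \<in> H b a" "f' \<cdot> f = idd a" "f \<cdot> f' = idd b" using iso_inv[OF isf f] by blast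
  obtain g' where g': "g' \<in> H c b" "g' \<cdot> g = idd b" "g \<cdot> g' = idd c" using iso_inv[OF isg g] by blast
  have "(f' \<cdot> g') \<cdot> (g \<cdot> f) = f' \<cdot> (g' \<cdot> (g \<cdot> f))" using comp_assoc[OF comp_hom[OF f g] g'(1) f'(1)] by simp
  also have "\<dots> = f' \<cdot> f" using comp_assoc[OF f g g'(1)] g'(2) f by simp
  finally have 1: "(f' \<cdot> g') \<cdot> (g \<cdot> f) = idd a" using f'(2) by simp
  have "(g \<cdot> f) \<cdot> (f' \<cdot> g') = g \<cdot> (f \<cdot> (f' \<cdot> g'))" using comp_assoc[OF comp_hom[OF g'(1) f'(1)] f g] by simp
  also have "\<dots> = g \<cdot> g'" using comp_assoc[OF g'(1) f'(1) f] f'(3) g'(1) by simp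
  finally have 2: "(g \<cdot> f) \<cdot> (f' \<cdot> g') = idd c" using g'(3) by simp
  show ?thesis by (rule iso_intro[OF comp_hom[OF f g] comp_hom[OF g'(1) f'(1)] 1 2])
qed

lemma iso_cancel:
  assumes a: "a \<in> H y z" and b: "b \<in> H x y" and c: "c \<in> H w x"
    and isa: "iso C a" and isc: "iso C c" and isabc: "iso C (a \<cdot> b \<cdot> c)"
  shows "iso C b"
proof -
  obtain a' where a': "a' \<in> H z y" "a' \<cdot> a = idd y" "a \<cdot> a' = idd z" using iso_inv[OF isa a] by blast
  obtain c' where c': "c' \<in> H x w" "c' \<cdot> c = idd w" "c \<cdot> c' = idd x" using iso_inv[OF isc c] by blast
  have ia': "iso C a'" by (rule iso_intro[OF a'(1) a a'(3) a'(2)])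
  have ic': "iso C c'" by (rule iso_intro[OF c'(1) c c'(3) c'(2)])
  have abc: "a \<cdot> b \<cdot> c \<in> H w z" by (rule comp_hom[OF comp_hom[OF c b] a])
  have "a' \<cdot> ((a \<cdot> b \<cdot> c) \<cdot> c') = a' \<cdot> (a \<cdot> (b \<cdot> (c \<cdot> c')))"
    using comp_assoc[OF c'(1) comp_hom[OF c b] a] comp_assoc[OF c'(1) c b] by simp
  also have "\<dots> = b" using c'(3) b comp_assoc[OF b a a'(1)] a'(2) by simp
  finally have eq: "a' \<cdot> ((a \<cdot> b \<cdot> c) \<cdot> c') = b" .
  have "iso C (a' \<cdot> ((a \<cdot> b \<cdot> c) \<cdot> c'))"
    by (rule iso_comp[OF comp_hom[OF c'(1) abc] a'(1) iso_comp[OF c'(1) abc ic' isabc] ia'])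
  thus ?thesis using eq by simp
qed

lemma iso_mono: "iso C h \<Longrightarrow> h \<in> H W V \<Longrightarrow> x \<in> H Z W \<Longrightarrow> y \<in> H Z W \<Longrightarrow> h \<cdot> x = h \<cdot> y \<Longrightarrow> x = y"
proof -
  assume ih: "iso C h" and h: "h \<in> H W V" and x: "x \<in> H Z W" and y: "y \<in> H Z W" and eq: "h \<cdot> x = h \<cdot> y"
  obtain h' where h': "h' \<in> H V W" "h' \<cdot> h = idd W" using iso_inv[OF ih h] by blast
  have "x = (h' \<cdot> h) \<cdot> x" using h'(2) x by simp
  also have "\<dots> = h' \<cdot> (h \<cdot> x)" using comp_assoc[OF x h h'(1)] by simp
  also have "\<dots> = (h' \<cdot> h) \<cdot> y" using eq comp_assoc[OF y h h'(1)] by simp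
  also have "\<dots> = y" using h'(2) y by simp
  finally show ?thesis .
qed

lemma dual_transport:
  assumes A: "A \<in> cObj C" and W0: "W0 \<in> cObj C" and e0: "e0 \<in> H (W0 \<odot> A) I"
    and k0: "k0 \<in> H I (A \<odot> W0)" and z1: "(idd A \<otimes> e0) \<cdot> (k0 \<otimes> idd A) = idd A"
    and u: "univ A I W e"
  shows "\<exists>k. k \<in> H I (A \<odot> W) \<and> (idd A \<otimes> e) \<cdot> (k \<otimes> idd A) = idd A \<and>
             (e \<otimes> idd W) \<cdot> (idd W \<otimes> k) = idd W"
proof -
  have W: "W \<in> cObj C" and e: "e \<in> H (W \<odot> A) I" using univ_props[OF u] by auto
  have e0': "e0 \<in> H (W0 \<odot> A) I" using e0 .
  obtain h where h: "h \<in> H W0 W" "e \<cdot> (h \<otimes> idd A) = e0" using univ_ex[OF u W0 e0'] by blast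
  have t1: "idd A \<otimes> h \<in> H (A \<odot> W0) (A \<odot> W)" using ten_hom[OF id_hom[OF A] h(1)] .
  have k: "(idd A \<otimes> h) \<cdot> k0 \<in> H I (A \<odot> W)" by (rule comp_hom[OF k0 t1])
  have t2: "k0 \<otimes> idd A \<in> H A (A \<odot> W0 \<odot> A)" using ten_hom[OF k0 id_hom[OF A]] A W0 by simp
  have t3: "idd A \<otimes> (h \<otimes> idd A) \<in> H (A \<odot> W0 \<odot> A) (A \<odot> W \<odot> A)"
    using ten_hom[OF id_hom[OF A] ten_hom[OF h(1) id_hom[OF A]]] .
  have t4: "idd A \<otimes> e \<in> H (A \<odot> W \<odot> A) A" using ten_hom[OF id_hom[OF A] e] A W by simp
  have "(idd A \<otimes> e) \<cdot> (((idd A \<otimes> h) \<cdot> k0) \<otimes> idd A)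
      = (idd A \<otimes> e) \<cdot> (((idd A \<otimes> h) \<otimes> idd A) \<cdot> (k0 \<otimes> idd A))"
    using comp_ten_idr[OF k0 t1 A] by simp
  also have "\<dots> = (idd A \<otimes> e) \<cdot> ((idd A \<otimes> (h \<otimes> idd A)) \<cdot> (k0 \<otimes> idd A))"
    using tA_assoc[OF id_hom[OF A] h(1) id_hom[OF A]] by simp
  also have "\<dots> = ((idd A \<otimes> e) \<cdot> (idd A \<otimes> (h \<otimes> idd A))) \<cdot> (k0 \<otimes> idd A)"
    by (rule comp_assoc[OF t2 t3 t4])
  also have "\<dots> = (idd A \<otimes> e0) \<cdot> (k0 \<otimes> idd A)"
    using comp_ten_idl[OF ten_hom[OF h(1) id_hom[OF A]] e A] h(2) by simp
  finally have zz: "(idd A \<otimes> e) \<cdot> (((idd A \<otimes> h) \<cdot> k0) \<otimes> idd A) = idd A" using z1 by simp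
  show ?thesis using k zz zig2_from_zig1[OF A u k zz] by blast
qed

lemma univ_transport:
  assumes A: "A \<in> cObj C" and u: "univ A B V ev" and h: "h \<in> H W V" and ih: "iso C h"
    and uu: "uu \<in> H B B'" and iu: "iso C uu"
  shows "univ A B' W (uu \<cdot> (ev \<cdot> (h \<otimes> idd A)))"
proof -
  have V: "V \<in> cObj C" and ev: "ev \<in> H (V \<odot> A) B" using univ_props[OF u] by auto
  have W: "W \<in> cObj C" using hom_ob[OF h] by simp
  have hA: "h \<otimes> idd A \<in> H (W \<odot> A) (V \<odot> A)" by (rule ten_hom[OF h id_hom[OF A]])
  have E: "uu \<cdot> (ev \<cdot> (h \<otimes> idd A)) \<in> H (W \<odot> A) B'" by (rule comp_hom[OF comp_hom[OF hA ev] uu])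
  obtain u' where u': "u' \<in> H B' B" "u' \<cdot> uu = idd B" "uu \<cdot> u' = idd B'" using iso_inv[OF iu uu] by blast
  obtain h' where h': "h' \<in> H V W" "h' \<cdot> h = idd W" "h \<cdot> h' = idd V" using iso_inv[OF ih h] by blast
  have key: "(uu \<cdot> (ev \<cdot> (h \<otimes> idd A))) \<cdot> (g \<otimes> idd A) = uu \<cdot> (ev \<cdot> ((h \<cdot> g) \<otimes> idd A))"
    if g: "g \<in> H Z W" for g Z
  proof -
    have gA: "g \<otimes> idd A \<in> H (Z \<odot> A) (W \<odot> A)" by (rule ten_hom[OF g id_hom[OF A]])
    have "(uu \<cdot> (ev \<cdot> (h \<otimes> idd A))) \<cdot> (g \<otimes> idd A) = uu \<cdot> ((ev \<cdot> (h \<otimes> idd A)) \<cdot> (g \<otimes> idd A))"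
      using comp_assoc[OF gA comp_hom[OF hA ev] uu] by simp
    also have "\<dots> = uu \<cdot> (ev \<cdot> ((h \<otimes> idd A) \<cdot> (g \<otimes> idd A)))"
      using comp_assoc[OF gA hA ev] by simp
    also have "\<dots> = uu \<cdot> (ev \<cdot> ((h \<cdot> g) \<otimes> idd A))"
      using comp_ten_idr[OF g h A] by simp
    finally show ?thesis .
  qed
  have "\<forall>Z\<in>cObj C. \<forall>f\<in>H (Z \<odot> A) B'. \<exists>!g. g \<in> H Z W \<and> (uu \<cdot> (ev \<cdot> (h \<otimes> idd A))) \<cdot> (g \<otimes> idd A) = f"
  proof (intro ballI)
    fix Z f assume Z: "Z \<in> cObj C" and f: "f \<in> H (Z \<odot> A) B'"
    have uf: "u' \<cdot> f \<in> H (Z \<odot> A) B" by (rule comp_hom[OF f u'(1)])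
    obtain g0 where g0: "g0 \<in> H Z V" "ev \<cdot> (g0 \<otimes> idd A) = u' \<cdot> f" using univ_ex[OF u Z uf] by blast
    have g: "h' \<cdot> g0 \<in> H Z W" by (rule comp_hom[OF g0(1) h'(1)])
    have hg: "h \<cdot> (h' \<cdot> g0) = g0" using comp_assoc[OF g0(1) h'(1) h] h'(3) g0(1) by simp
    show "\<exists>!g. g \<in> H Z W \<and> (uu \<cdot> (ev \<cdot> (h \<otimes> idd A))) \<cdot> (g \<otimes> idd A) = f"
    proof (rule ex1I[of _ "h' \<cdot> g0"])
      show "h' \<cdot> g0 \<in> H Z W \<and> (uu \<cdot> (ev \<cdot> (h \<otimes> idd A))) \<cdot> ((h' \<cdot> g0) \<otimes> idd A) = f"
        using g key[OF g] hg g0(2) comp_assoc[OF f u'(1) uu] u'(3) f by simp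
    next
      fix g1 assume g1: "g1 \<in> H Z W \<and> (uu \<cdot> (ev \<cdot> (h \<otimes> idd A))) \<cdot> (g1 \<otimes> idd A) = f"
      have a1: "ev \<cdot> ((h \<cdot> g1) \<otimes> idd A) \<in> H (Z \<odot> A) B"
        by (rule comp_hom[OF ten_hom[OF comp_hom[OF _ h] id_hom[OF A]] ev]) (use g1 in simp)
      have a2: "ev \<cdot> ((h \<cdot> (h' \<cdot> g0)) \<otimes> idd A) \<in> H (Z \<odot> A) B"
        by (rule comp_hom[OF ten_hom[OF comp_hom[OF g h] id_hom[OF A]] ev])
      have "uu \<cdot> (ev \<cdot> ((h \<cdot> g1) \<otimes> idd A)) = uu \<cdot> (ev \<cdot> ((h \<cdot> (h' \<cdot> g0)) \<otimes> idd A))"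
        using key[of g1 Z] key[OF g] g1 g key[OF g] hg g0(2) comp_assoc[OF f u'(1) uu] u'(3) f by simp
      hence "ev \<cdot> ((h \<cdot> g1) \<otimes> idd A) = ev \<cdot> ((h \<cdot> (h' \<cdot> g0)) \<otimes> idd A)"
        by (rule iso_mono[OF iu uu a1 a2])
      hence "h \<cdot> g1 = h \<cdot> (h' \<cdot> g0)"
        by (rule univ_uniq[OF u comp_hom[OF _ h] comp_hom[OF g h] _ A, rotated]) (use g1 in simp)
      thus "g1 = h' \<cdot> g0" by (rule iso_mono[OF ih h conjunct1[OF g1] g])
    qed
  qed
  thus ?thesis unfolding univ_def using W E by simp
qed

lemma n_iso:
  assumes A: "A \<in> cObj C" and W: "W \<in> cObj C" and e: "e \<in> H (W \<odot> A) I"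
    and k: "k \<in> H I (A \<odot> W)" and z1: "(idd A \<otimes> e) \<cdot> (k \<otimes> idd A) = idd A"
    and z2: "(e \<otimes> idd W) \<cdot> (idd W \<otimes> k) = idd W"
    and u: "univ A A E v" and n: "n \<in> H (A \<odot> W) E"
    and eq: "v \<cdot> (n \<otimes> idd A) = idd A \<otimes> e"
  shows "iso C n"
proof -
  have E: "E \<in> cObj C" and v: "v \<in> H (E \<odot> A) A" using univ_props[OF u] by auto
  have EA: "E \<odot> A \<in> cObj C" and WA: "W \<odot> A \<in> cObj C" and AW: "A \<odot> W \<in> cObj C" using E A W by auto
  have t1: "idd E \<otimes> k \<in> H E (E \<odot> A \<odot> W)" using ten_hom[OF id_hom[OF E] k] E A W by simp
  have t2: "v \<otimes> idd W \<in> H (E \<odot> A \<odot> W) (A \<odot> W)" using ten_hom[OF v id_hom[OF W]] E A W by simp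
  define d where "d = (v \<otimes> idd W) \<cdot> (idd E \<otimes> k)"
  have d: "d \<in> H E (A \<odot> W)" unfolding d_def by (rule comp_hom[OF t1 t2])
  have t3: "k \<otimes> idd A \<in> H A (A \<odot> W \<odot> A)" using ten_hom[OF k id_hom[OF A]] W A by simp
  have t4: "idd A \<otimes> e \<in> H (A \<odot> W \<odot> A) A" using ten_hom[OF id_hom[OF A] e] W A by simp
  have t5: "idd E \<otimes> (k \<otimes> idd A) \<in> H (E \<odot> A) (E \<odot> A \<odot> W \<odot> A)"
    using ten_hom[OF id_hom[OF E] t3] E W A by simp
  have t6: "v \<otimes> idd (W \<odot> A) \<in> H (E \<odot> A \<odot> W \<odot> A) (A \<odot> W \<odot> A)"
    using ten_hom[OF v id_hom[OF WA]] E W A by simp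
  have t7: "idd (E \<odot> A) \<otimes> e \<in> H (E \<odot> A \<odot> W \<odot> A) (E \<odot> A)"
    using ten_hom[OF id_hom[OF EA] e] E W A by simp
  have nA: "n \<otimes> idd A \<in> H (A \<odot> W \<odot> A) (E \<odot> A)" using ten_hom[OF n id_hom[OF A]] W A by simp
  have dA: "d \<otimes> idd A \<in> H (E \<odot> A) (A \<odot> W \<odot> A)" using ten_hom[OF d id_hom[OF A]] E W A by simp
  have ve1: "(idd A \<otimes> e) \<cdot> (v \<otimes> idd (W \<odot> A)) = v \<otimes> e"
    using ten_split2[OF v e] by simp
  have ve2: "v \<cdot> (idd (E \<odot> A) \<otimes> e) = v \<otimes> e"
    using ten_split1[OF v e] tA_unit(2)[OF v] by simp
  have "v \<cdot> ((n \<cdot> d) \<otimes> idd A) = v \<cdot> ((n \<otimes> idd A) \<cdot> (d \<otimes> idd A))"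
    using comp_ten_idr[OF d n A] by simp
  also have "\<dots> = (idd A \<otimes> e) \<cdot> (d \<otimes> idd A)"
    using comp_assoc[OF dA nA v] eq by simp
  also have "d \<otimes> idd A = (v \<otimes> idd (W \<odot> A)) \<cdot> (idd E \<otimes> (k \<otimes> idd A))"
    unfolding d_def using comp_ten_idr[OF t1 t2 A] tA_assoc[OF v id_hom[OF W] id_hom[OF A]]
      tA_assoc[OF id_hom[OF E] k id_hom[OF A]] W A by simp
  also have "(idd A \<otimes> e) \<cdot> ((v \<otimes> idd (W \<odot> A)) \<cdot> (idd E \<otimes> (k \<otimes> idd A)))
     = (v \<cdot> (idd (E \<odot> A) \<otimes> e)) \<cdot> (idd E \<otimes> (k \<otimes> idd A))"
    using comp_assoc[OF t5 t6 t4] ve1 ve2 by simp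
  also have "\<dots> = v \<cdot> ((idd E \<otimes> (idd A \<otimes> e)) \<cdot> (idd E \<otimes> (k \<otimes> idd A)))"
    using comp_assoc[OF t5 t7 v] tA_assoc[OF id_hom[OF E] id_hom[OF A] e] E A by simp
  also have "\<dots> = v \<cdot> (idd E \<otimes> idd A)"
    using comp_ten_idl[OF t3 t4 E] z1 by simp
  finally have "v \<cdot> ((n \<cdot> d) \<otimes> idd A) = v \<cdot> (idd E \<otimes> idd A)" .
  hence nd: "n \<cdot> d = idd E" by (rule univ_uniq[OF u comp_hom[OF d n] id_hom[OF E] _ A])
  have t8: "n \<otimes> idd (A \<odot> W) \<in> H (A \<odot> W \<odot> A \<odot> W) (E \<odot> A \<odot> W)"
    using ten_hom[OF n id_hom[OF AW]] E A W by simp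
  have t9: "idd (A \<odot> W) \<otimes> k \<in> H (A \<odot> W) (A \<odot> W \<odot> A \<odot> W)"
    using ten_hom[OF id_hom[OF AW] k] A W by simp
  have t10: "idd W \<otimes> k \<in> H W (W \<odot> A \<odot> W)" using ten_hom[OF id_hom[OF W] k] A W by simp
  have t11: "e \<otimes> idd W \<in> H (W \<odot> A \<odot> W) W" using ten_hom[OF e id_hom[OF W]] A W by simp
  have nk1: "(idd E \<otimes> k) \<cdot> n = n \<otimes> k"
    using ten_split2[OF n k] tA_unit(2)[OF n] by simp
  have nk2: "(n \<otimes> idd (A \<odot> W)) \<cdot> (idd (A \<odot> W) \<otimes> k) = n \<otimes> k"
    using ten_split1[OF n k] by simp
  have "d \<cdot> n = (v \<otimes> idd W) \<cdot> ((idd E \<otimes> k) \<cdot> n)"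
    unfolding d_def using comp_assoc[OF n t1 t2] by simp
  also have "\<dots> = ((v \<otimes> idd W) \<cdot> (n \<otimes> idd (A \<odot> W))) \<cdot> (idd (A \<odot> W) \<otimes> k)"
    using nk1 nk2 comp_assoc[OF t9 t8 t2] by simp
  also have "(v \<otimes> idd W) \<cdot> (n \<otimes> idd (A \<odot> W)) = (v \<cdot> (n \<otimes> idd A)) \<otimes> idd W"
    using comp_ten_idr[OF nA v W] tA_assoc[OF n id_hom[OF A] id_hom[OF W]] A W by simp
  also have "\<dots> = idd A \<otimes> (e \<otimes> idd W)" using eq tA_assoc[OF id_hom[OF A] e id_hom[OF W]] by simp
  also have "idd (A \<odot> W) \<otimes> k = idd A \<otimes> (idd W \<otimes> k)"
    using tA_assoc[OF id_hom[OF A] id_hom[OF W] k] A W by simp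
  also have "(idd A \<otimes> (e \<otimes> idd W)) \<cdot> (idd A \<otimes> (idd W \<otimes> k)) = idd (A \<odot> W)"
    using comp_ten_idl[OF t10 t11 A] z2 A W by simp
  finally have dn: "d \<cdot> n = idd (A \<odot> W)" .
  show ?thesis by (rule iso_intro[OF n d dn nd])
qed

lemma dual_from_c:
  assumes X: "X \<in> cObj C" and uX: "univ X X E evX" and u1: "univ X I V ev1"
    and c: "c \<in> H (X \<odot> V) E" and eq: "evX \<cdot> (c \<otimes> idd X) = idd X \<otimes> ev1"
    and ic: "iso C c"
  shows "\<exists>k. k \<in> H I (X \<odot> V) \<and> (idd X \<otimes> ev1) \<cdot> (k \<otimes> idd X) = idd X \<and>
             (ev1 \<otimes> idd V) \<cdot> (idd V \<otimes> k) = idd V"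
proof -
  have E: "E \<in> cObj C" and evX: "evX \<in> H (E \<odot> X) X" using univ_props[OF uX] by auto
  have V: "V \<in> cObj C" using univ_props[OF u1] by auto
  have iX: "idd X \<in> H (I \<odot> X) X" using id_hom[OF X] X by simp
  obtain j where j: "j \<in> H I E" "evX \<cdot> (j \<otimes> idd X) = idd X" using univ_ex[OF uX unit_ob iX] by blast
  obtain c' where c': "c' \<in> H E (X \<odot> V)" "c \<cdot> c' = idd E" using iso_inv[OF ic c] by blast
  have k: "c' \<cdot> j \<in> H I (X \<odot> V)" by (rule comp_hom[OF j(1) c'(1)])
  have kX: "(c' \<cdot> j) \<otimes> idd X \<in> H X (X \<odot> V \<odot> X)" using ten_hom[OF k id_hom[OF X]] X V by simp
  have cX: "c \<otimes> idd X \<in> H (X \<odot> V \<odot> X) (E \<odot> X)" using ten_hom[OF c id_hom[OF X]] X V by simp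
  have "(idd X \<otimes> ev1) \<cdot> ((c' \<cdot> j) \<otimes> idd X) = evX \<cdot> ((c \<otimes> idd X) \<cdot> ((c' \<cdot> j) \<otimes> idd X))"
    using eq comp_assoc[OF kX cX evX] by simp
  also have "\<dots> = evX \<cdot> ((c \<cdot> (c' \<cdot> j)) \<otimes> idd X)" using comp_ten_idr[OF k c X] by simp
  also have "c \<cdot> (c' \<cdot> j) = j" using comp_assoc[OF j(1) c'(1) c] c'(2) j(1) by simp
  finally have z1: "(idd X \<otimes> ev1) \<cdot> ((c' \<cdot> j) \<otimes> idd X) = idd X" using j(2) by simp
  show ?thesis using k z1 zig2_from_zig1[OF X u1 k z1] by blast
qed
end

lemma lc_smc: "left_closed C \<Longrightarrow> smc C"
  unfolding left_closed_def by (simp add: smc.intro)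

lemma lc_univ: "left_closed C \<Longrightarrow> X \<in> cObj C \<Longrightarrow> Y \<in> cObj C \<Longrightarrow> smc.univ C X Y (cHom C X Y) (cEv C X Y)"
proof -
  assume l: "left_closed C" and X: "X \<in> cObj C" and Y: "Y \<in> cObj C"
  show ?thesis unfolding smc.univ_def[OF lc_smc[OF l]] using l X Y unfolding left_closed_def by simp
qed

lemma smf_parts:
  assumes "strong_monoidal_functor D C U"
  shows "\<forall>a\<in>cObj D. fObj U a \<in> cObj C"
    "\<forall>f\<in>cArr D. fArr U f \<in> hom C (fObj U (cDom D f)) (fObj U (cCod D f))"
    "\<forall>a\<in>cObj D. fArr U (cId D a) = cId C (fObj U a)"
    "\<forall>f\<in>cArr D. \<forall>g\<in>cArr D. cCod D f = cDom D g \<longrightarrow>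
        fArr U (cComp D g f) = cComp C (fArr U g) (fArr U f)"
    "\<forall>A\<in>cObj D. \<forall>B\<in>cObj D.
        fTwo U A B \<in> hom C (cTen C (fObj U A) (fObj U B)) (fObj U (cTen D A B)) \<and>
        iso C (fTwo U A B)"
    "fZero U \<in> hom C (cUnit C) (fObj U (cUnit D))" "iso C (fZero U)"
    "\<forall>f\<in>cArr D. \<forall>g\<in>cArr D.
        cComp C (fTwo U (cCod D f) (cCod D g)) (cTenA C (fArr U f) (fArr U g))
        = cComp C (fArr U (cTenA D f g)) (fTwo U (cDom D f) (cDom D g))"
    "\<forall>A\<in>cObj D. \<forall>B\<in>cObj D. \<forall>E\<in>cObj D.
        cComp C (fTwo U (cTen D A B) E) (cTenA C (fTwo U A B) (cId C (fObj U E)))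
        = cComp C (fTwo U A (cTen D B E)) (cTenA C (cId C (fObj U A)) (fTwo U B E))"
    "\<forall>A\<in>cObj D.
        cComp C (fTwo U (cUnit D) A) (cTenA C (fZero U) (cId C (fObj U A))) = cId C (fObj U A) \<and>
        cComp C (fTwo U A (cUnit D)) (cTenA C (cId C (fObj U A)) (fZero U)) = cId C (fObj U A)"
  using assms unfolding strong_monoidal_functor_def is_functor_def by simp_all

lemma cc_prop:
  assumes lD: "left_closed D" and lC: "left_closed C" and F: "strong_monoidal_functor D C U"
    and X: "X \<in> cObj D" and Y: "Y \<in> cObj D"
  shows "closed_comparison D C U X Y \<in> hom C (fObj U (cHom D X Y)) (cHom C (fObj U X) (fObj U Y)) \<and>
        cComp C (cEv C (fObj U X) (fObj U Y)) (cTenA C (closed_comparison D C U X Y) (cId C (fObj U X)))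
        = cComp C (fArr U (cEv D X Y)) (fTwo U (cHom D X Y) X)"
proof -
  interpret Cc: smc C by (rule lc_smc[OF lC])
  have sD: "smc D" by (rule lc_smc[OF lD])
  have uD: "smc.univ D X Y (cHom D X Y) (cEv D X Y)" by (rule lc_univ[OF lD X Y])
  have HO: "cHom D X Y \<in> cObj D" and evD: "cEv D X Y \<in> hom D (cTen D (cHom D X Y) X) Y"
    using smc.univ_props[OF sD uD] by auto
  have UX: "fObj U X \<in> cObj C" and UY: "fObj U Y \<in> cObj C" and UH: "fObj U (cHom D X Y) \<in> cObj C"
    using smf_parts(1)[OF F] X Y HO by auto
  have Uev: "fArr U (cEv D X Y) \<in> hom C (fObj U (cTen D (cHom D X Y) X)) (fObj U Y)"
    using smf_parts(2)[OF F] evD smc.hom_Ar[OF sD evD] smc.hom_dom[OF sD evD] smc.hom_cod[OF sD evD] by metis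
  have U2: "fTwo U (cHom D X Y) X \<in> hom C (fObj U (cHom D X Y) \<odot> fObj U X) (fObj U (cTen D (cHom D X Y) X))"
    using smf_parts(5)[OF F] HO X by simp
  have f: "fArr U (cEv D X Y) \<cdot> fTwo U (cHom D X Y) X \<in> Cc.H (fObj U (cHom D X Y) \<odot> fObj U X) (fObj U Y)"
    by (rule Cc.comp_hom[OF U2 Uev])
  have uC: "Cc.univ (fObj U X) (fObj U Y) (cHom C (fObj U X) (fObj U Y)) (cEv C (fObj U X) (fObj U Y))"
    by (rule lc_univ[OF lC UX UY])
  have "\<exists>!g. g \<in> Cc.H (fObj U (cHom D X Y)) (cHom C (fObj U X) (fObj U Y)) \<and>
     cEv C (fObj U X) (fObj U Y) \<cdot> (g \<otimes> Cc.idd (fObj U X)) = fArr U (cEv D X Y) \<cdot> fTwo U (cHom D X Y) X"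
    using uC UH f unfolding Cc.univ_def by simp
  from theI'[OF this] show ?thesis unfolding closed_comparison_def .
qed

lemma smf_hom: "strong_monoidal_functor D C U \<Longrightarrow> f \<in> hom D a b \<Longrightarrow> fArr U f \<in> hom C (fObj U a) (fObj U b)"
  using smf_parts(2) unfolding hom_def by blast
lemma smf_comp: "strong_monoidal_functor D C U \<Longrightarrow> f \<in> hom D a b \<Longrightarrow> g \<in> hom D b c \<Longrightarrow>
   fArr U (cComp D g f) = cComp C (fArr U g) (fArr U f)"
  using smf_parts(4) unfolding hom_def by (metis (mono_tags, lifting) mem_Collect_eq)
lemma smf_id: "strong_monoidal_functor D C U \<Longrightarrow> a \<in> cObj D \<Longrightarrow> fArr U (cId D a) = cId C (fObj U a)"
  using smf_parts(3) by blast
lemma smf_nat: "strong_monoidal_functor D C U \<Longrightarrow> f \<in> hom D a b \<Longrightarrow> g \<in> hom D c d \<Longrightarrow>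
   cComp C (fTwo U b d) (cTenA C (fArr U f) (fArr U g)) = cComp C (fArr U (cTenA D f g)) (fTwo U a c)"
  using smf_parts(8) unfolding hom_def by (metis (mono_tags, lifting) mem_Collect_eq)
lemma smf_two: "strong_monoidal_functor D C U \<Longrightarrow> a \<in> cObj D \<Longrightarrow> b \<in> cObj D \<Longrightarrow>
   fTwo U a b \<in> hom C (cTen C (fObj U a) (fObj U b)) (fObj U (cTen D a b))"
  using smf_parts(5) by blast
lemma smf_two_iso: "strong_monoidal_functor D C U \<Longrightarrow> a \<in> cObj D \<Longrightarrow> b \<in> cObj D \<Longrightarrow> iso C (fTwo U a b)"
  using smf_parts(5) by blast
lemma smf_ob: "strong_monoidal_functor D C U \<Longrightarrow> a \<in> cObj D \<Longrightarrow> fObj U a \<in> cObj C"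
  using smf_parts(1) by blast

theorem mainTheorem4:
  fixes D :: "('o1, 'm1) lcmc" and C :: "('o2, 'm2) lcmc" and U :: "('o1, 'm1, 'o2, 'm2) mfun"
  assumes "left_closed D" and "left_closed C"
    and "strong_monoidal_functor D C U"
    and "conservative D C U" and "left_closed_functor D C U"
    and "left_autonomous C"
  shows "left_autonomous D"
proof -
  have sD: "smc D" by (rule lc_smc[OF assms(1)])
  interpret Cc: smc C by (rule lc_smc[OF assms(2)])
  note F = assms(3)
  note [simp] = smc.tO_assoc[OF sD] smc.tO_unit[OF sD] smc.tO_ob[OF sD] smc.unit_ob[OF sD]
  have sDm: "strict_monoidal D" using assms(1) unfolding left_closed_def by simp
  have dualD: "\<exists>Xv e c. Xv \<in> cObj D \<and>
        e \<in> hom D (cTen D Xv X) (cUnit D) \<and>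
        c \<in> hom D (cUnit D) (cTen D X Xv) \<and>
        cComp D (cTenA D (cId D X) e) (cTenA D c (cId D X)) = cId D X \<and>
        cComp D (cTenA D e (cId D Xv)) (cTenA D (cId D Xv) c) = cId D Xv" if X: "X \<in> cObj D" for X
  proof -
    let ?I = "cUnit D"
    let ?V = "cHom D X ?I"
    let ?E = "cHom D X X"
    let ?ev1 = "cEv D X ?I"
    let ?evX = "cEv D X X"
    have ID: "?I \<in> cObj D" by (rule smc.unit_ob[OF sD])
    have u1: "smc.univ D X ?I ?V ?ev1" by (rule lc_univ[OF assms(1) X ID])
    have uX: "smc.univ D X X ?E ?evX" by (rule lc_univ[OF assms(1) X X])
    have V: "?V \<in> cObj D" and ev1: "?ev1 \<in> hom D (cTen D ?V X) ?I"
      using smc.univ_props[OF sD u1] by auto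
    have E: "?E \<in> cObj D" and evX: "?evX \<in> hom D (cTen D ?E X) X"
      using smc.univ_props[OF sD uX] by auto
    have idX: "cId D X \<in> hom D X X" by (rule smc.id_hom[OF sD X])
    have f: "cTenA D (cId D X) ?ev1 \<in> hom D (cTen D (cTen D X ?V) X) X"
      using smc.ten_hom[OF sD idX ev1] X V by simp
    obtain c where c: "c \<in> hom D (cTen D X ?V) ?E"
      "cComp D ?evX (cTenA D c (cId D X)) = cTenA D (cId D X) ?ev1"
      using smc.univ_ex[OF sD uX smc.tO_ob[OF sD X V] f] by blast
    have cX: "cTenA D c (cId D X) \<in> hom D (cTen D X (cTen D ?V X)) (cTen D ?E X)"
      using smc.ten_hom[OF sD c(1) idX] X V by simp
    have ide: "cTenA D (cId D X) ?ev1 \<in> hom D (cTen D X (cTen D ?V X)) X"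
      using smc.ten_hom[OF sD idX ev1] X V by simp
    let ?A = "fObj U X"
    let ?UI = "fObj U ?I"
    let ?W = "fObj U ?V"
    let ?UE = "fObj U ?E"
    have A: "?A \<in> cObj C" using smf_ob[OF F X] .
    have UI: "?UI \<in> cObj C" using smf_ob[OF F ID] .
    have W: "?W \<in> cObj C" using smf_ob[OF F V] .
    have UE: "?UE \<in> cObj C" using smf_ob[OF F E] .
    have UVX: "fObj U (cTen D ?V X) \<in> cObj C" using smf_ob[OF F] V X by simp
    have UXV: "fObj U (cTen D X ?V) \<in> cObj C" using smf_ob[OF F] V X by simp
    define Ul1 where "Ul1 = closed_comparison D C U X ?I"
    define UlX where "UlX = closed_comparison D C U X X"
    have Ul1: "Ul1 \<in> Cc.H ?W (cHom C ?A ?UI)"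
      "cEv C ?A ?UI \<cdot> (Ul1 \<otimes> Cc.idd ?A) = fArr U ?ev1 \<cdot> fTwo U ?V X"
      using cc_prop[OF assms(1,2,3) X ID] unfolding Ul1_def by auto
    have UlX: "UlX \<in> Cc.H ?UE (cHom C ?A ?A)"
      "cEv C ?A ?A \<cdot> (UlX \<otimes> Cc.idd ?A) = fArr U ?evX \<cdot> fTwo U ?E X"
      using cc_prop[OF assms(1,2,3) X X] unfolding UlX_def by auto
    have iUl1: "iso C Ul1" using assms(5) X ID unfolding left_closed_functor_def Ul1_def by simp
    have iUlX: "iso C UlX" using assms(5) X unfolding left_closed_functor_def UlX_def by simp
    have U0: "fZero U \<in> Cc.H Cc.I ?UI" "iso C (fZero U)" using smf_parts(6,7)[OF F] by auto
    obtain u where u: "u \<in> Cc.H ?UI Cc.I" "u \<cdot> fZero U = Cc.idd Cc.I" "fZero U \<cdot> u = Cc.idd ?UI"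
      using Cc.iso_inv[OF U0(2) U0(1)] by blast
    have iu: "iso C u" by (rule Cc.iso_intro[OF u(1) U0(1) u(3) u(2)])
    have uA: "Cc.univ ?A ?UI (cHom C ?A ?UI) (cEv C ?A ?UI)" by (rule lc_univ[OF assms(2) A UI])
    let ?e = "u \<cdot> (cEv C ?A ?UI \<cdot> (Ul1 \<otimes> Cc.idd ?A))"
    have ue: "Cc.univ ?A Cc.I ?W ?e" by (rule Cc.univ_transport[OF A uA Ul1(1) iUl1 u(1) iu])
    have e: "?e \<in> Cc.H (?W \<odot> ?A) Cc.I" using Cc.univ_props[OF ue] by auto
    obtain W0 e0 k0 where d0: "W0 \<in> cObj C" "e0 \<in> Cc.H (W0 \<odot> ?A) Cc.I" "k0 \<in> Cc.H Cc.I (?A \<odot> W0)"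
      "(Cc.idd ?A \<otimes> e0) \<cdot> (k0 \<otimes> Cc.idd ?A) = Cc.idd ?A"
      using assms(6) A unfolding left_autonomous_def by blast
    obtain k where k: "k \<in> Cc.H Cc.I (?A \<odot> ?W)" "(Cc.idd ?A \<otimes> ?e) \<cdot> (k \<otimes> Cc.idd ?A) = Cc.idd ?A"
      "(?e \<otimes> Cc.idd ?W) \<cdot> (Cc.idd ?W \<otimes> k) = Cc.idd ?W"
      using Cc.dual_transport[OF A d0 ue] by blast
    let ?s = "fTwo U X ?V"
    let ?Uc = "fArr U c"
    let ?s2 = "fTwo U ?E X"
    let ?t3 = "fTwo U (cTen D X ?V) X"
    let ?t4 = "fTwo U X (cTen D ?V X)"
    let ?s3 = "fTwo U ?V X"
    let ?t6 = "fTwo U X ?I"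
    have s: "?s \<in> Cc.H (?A \<odot> ?W) (fObj U (cTen D X ?V))" using smf_two[OF F X V] .
    have Uc: "?Uc \<in> Cc.H (fObj U (cTen D X ?V)) ?UE" using smf_hom[OF F c(1)] .
    have ucs: "?Uc \<cdot> ?s \<in> Cc.H (?A \<odot> ?W) ?UE" by (rule Cc.comp_hom[OF s Uc])
    have n: "UlX \<cdot> (?Uc \<cdot> ?s) \<in> Cc.H (?A \<odot> ?W) (cHom C ?A ?A)" by (rule Cc.comp_hom[OF ucs UlX(1)])
    have uAA: "Cc.univ ?A ?A (cHom C ?A ?A) (cEv C ?A ?A)" by (rule lc_univ[OF assms(2) A A])
    have evCA: "cEv C ?A ?A \<in> Cc.H (cHom C ?A ?A \<odot> ?A) ?A" using Cc.univ_props[OF uAA] by auto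
    have AA: "cHom C ?A ?A \<in> cObj C" using Cc.univ_props[OF uAA] by auto
    have sA: "?s \<otimes> Cc.idd ?A \<in> Cc.H (?A \<odot> ?W \<odot> ?A) (fObj U (cTen D X ?V) \<odot> ?A)"
      using Cc.ten_hom[OF s Cc.id_hom[OF A]] A W by simp
    have UcA: "?Uc \<otimes> Cc.idd ?A \<in> Cc.H (fObj U (cTen D X ?V) \<odot> ?A) (?UE \<odot> ?A)"
      using Cc.ten_hom[OF Uc Cc.id_hom[OF A]] .
    have s2: "?s2 \<in> Cc.H (?UE \<odot> ?A) (fObj U (cTen D ?E X))" using smf_two[OF F E X] .
    have UevX: "fArr U ?evX \<in> Cc.H (fObj U (cTen D ?E X)) ?A" using smf_hom[OF F evX] .
    have UlXA: "UlX \<otimes> Cc.idd ?A \<in> Cc.H (?UE \<odot> ?A) (cHom C ?A ?A \<odot> ?A)"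
      using Cc.ten_hom[OF UlX(1) Cc.id_hom[OF A]] .
    have ucsA: "(?Uc \<cdot> ?s) \<otimes> Cc.idd ?A \<in> Cc.H (?A \<odot> ?W \<odot> ?A) (?UE \<odot> ?A)"
      using Cc.ten_hom[OF ucs Cc.id_hom[OF A]] A W by simp
    have t3: "?t3 \<in> Cc.H (fObj U (cTen D X ?V) \<odot> ?A) (fObj U (cTen D X (cTen D ?V X)))"
      using smf_two[OF F smc.tO_ob[OF sD X V] X] X V by simp
    have Ucid: "fArr U (cTenA D c (cId D X)) \<in> Cc.H (fObj U (cTen D X (cTen D ?V X))) (fObj U (cTen D ?E X))"
      using smf_hom[OF F cX] .
    have t4: "?t4 \<in> Cc.H (?A \<odot> fObj U (cTen D ?V X)) (fObj U (cTen D X (cTen D ?V X)))"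
      using smf_two[OF F X smc.tO_ob[OF sD V X]] .
    have s3: "?s3 \<in> Cc.H (?W \<odot> ?A) (fObj U (cTen D ?V X))" using smf_two[OF F V X] .
    have t5: "Cc.idd ?A \<otimes> ?s3 \<in> Cc.H (?A \<odot> ?W \<odot> ?A) (?A \<odot> fObj U (cTen D ?V X))"
      using Cc.ten_hom[OF Cc.id_hom[OF A] s3] .
    have Uide: "fArr U (cTenA D (cId D X) ?ev1) \<in> Cc.H (fObj U (cTen D X (cTen D ?V X))) ?A"
      using smf_hom[OF F ide] .
    have t6: "?t6 \<in> Cc.H (?A \<odot> ?UI) ?A" using smf_two[OF F X ID] X by simp
    have Uev1: "fArr U ?ev1 \<in> Cc.H (fObj U (cTen D ?V X)) ?UI" using smf_hom[OF F ev1] .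
    have t7: "Cc.idd ?A \<otimes> fArr U ?ev1 \<in> Cc.H (?A \<odot> fObj U (cTen D ?V X)) (?A \<odot> ?UI)"
      using Cc.ten_hom[OF Cc.id_hom[OF A] Uev1] .
    have nat1: "?s2 \<cdot> (?Uc \<otimes> Cc.idd ?A) = fArr U (cTenA D c (cId D X)) \<cdot> ?t3"
      using smf_nat[OF F c(1) idX] smf_id[OF F X] by simp
    have nat2: "?t6 \<cdot> (Cc.idd ?A \<otimes> fArr U ?ev1) = fArr U (cTenA D (cId D X) ?ev1) \<cdot> ?t4"
      using smf_nat[OF F idX ev1] smf_id[OF F X] by simp
    have ass: "?t3 \<cdot> (?s \<otimes> Cc.idd ?A) = ?t4 \<cdot> (Cc.idd ?A \<otimes> ?s3)"
      using smf_parts(9)[OF F] X V by simp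
    have Ucomp: "fArr U ?evX \<cdot> fArr U (cTenA D c (cId D X)) = fArr U (cTenA D (cId D X) ?ev1)"
      using smf_comp[OF F cX evX] c(2) by simp
    have unitax: "?t6 \<cdot> (Cc.idd ?A \<otimes> fZero U) = Cc.idd ?A"
      using smf_parts(10)[OF F] X by simp
    have t6u: "?t6 = Cc.idd ?A \<otimes> u"
    proof -
      have au: "Cc.idd ?A \<otimes> u \<in> Cc.H (?A \<odot> ?UI) ?A" using Cc.ten_hom[OF Cc.id_hom[OF A] u(1)] A by simp
      have a0: "Cc.idd ?A \<otimes> fZero U \<in> Cc.H ?A (?A \<odot> ?UI)" using Cc.ten_hom[OF Cc.id_hom[OF A] U0(1)] A by simp
      have "?t6 = ?t6 \<cdot> (Cc.idd ?A \<otimes> (fZero U \<cdot> u))" using u(3) t6 A UI by simp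
      also have "\<dots> = ?t6 \<cdot> ((Cc.idd ?A \<otimes> fZero U) \<cdot> (Cc.idd ?A \<otimes> u))"
        using Cc.comp_ten_idl[OF u(1) U0(1) A] by simp
      also have "\<dots> = Cc.idd ?A \<otimes> u" using Cc.comp_assoc[OF au a0 t6] unitax au by simp
      finally show ?thesis .
    qed
    have "cEv C ?A ?A \<cdot> ((UlX \<cdot> (?Uc \<cdot> ?s)) \<otimes> Cc.idd ?A)
        = cEv C ?A ?A \<cdot> ((UlX \<otimes> Cc.idd ?A) \<cdot> ((?Uc \<cdot> ?s) \<otimes> Cc.idd ?A))"
      using Cc.comp_ten_idr[OF ucs UlX(1) A] by simp
    also have "\<dots> = (fArr U ?evX \<cdot> ?s2) \<cdot> ((?Uc \<otimes> Cc.idd ?A) \<cdot> (?s \<otimes> Cc.idd ?A))"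
      using Cc.comp_assoc[OF ucsA UlXA evCA] UlX(2) Cc.comp_ten_idr[OF s Uc A] by simp
    also have "\<dots> = fArr U ?evX \<cdot> ((?s2 \<cdot> (?Uc \<otimes> Cc.idd ?A)) \<cdot> (?s \<otimes> Cc.idd ?A))"
      using Cc.comp_assoc[OF Cc.comp_hom[OF sA UcA] s2 UevX] Cc.comp_assoc[OF sA UcA s2] by simp
    also have "\<dots> = fArr U ?evX \<cdot> (fArr U (cTenA D c (cId D X)) \<cdot> (?t3 \<cdot> (?s \<otimes> Cc.idd ?A)))"
      using nat1 Cc.comp_assoc[OF sA t3 Ucid] by simp
    also have "\<dots> = fArr U (cTenA D (cId D X) ?ev1) \<cdot> (?t4 \<cdot> (Cc.idd ?A \<otimes> ?s3))"
      using Cc.comp_assoc[OF Cc.comp_hom[OF sA t3] Ucid UevX] Ucomp ass by simp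
    also have "\<dots> = ?t6 \<cdot> ((Cc.idd ?A \<otimes> fArr U ?ev1) \<cdot> (Cc.idd ?A \<otimes> ?s3))"
      using Cc.comp_assoc[OF t5 t4 Uide] nat2 Cc.comp_assoc[OF t5 t7 t6] by simp
    also have "\<dots> = (Cc.idd ?A \<otimes> u) \<cdot> (Cc.idd ?A \<otimes> (cEv C ?A ?UI \<cdot> (Ul1 \<otimes> Cc.idd ?A)))"
      using Cc.comp_ten_idl[OF s3 Uev1 A] t6u Ul1(2) by simp
    also have "\<dots> = Cc.idd ?A \<otimes> ?e"
      using Cc.comp_ten_idl[OF Cc.comp_hom[OF Cc.ten_hom[OF Ul1(1) Cc.id_hom[OF A]]
          Cc.univ_props[OF uA, THEN conjunct2]] u(1) A] by simp
    finally have eqn: "cEv C ?A ?A \<cdot> ((UlX \<cdot> (?Uc \<cdot> ?s)) \<otimes> Cc.idd ?A) = Cc.idd ?A \<otimes> ?e" .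
    have iso_n: "iso C (UlX \<cdot> (?Uc \<cdot> ?s))"
      by (rule Cc.n_iso[OF A W e k uAA n eqn])
    have iUc: "iso C ?Uc"
      by (rule Cc.iso_cancel[OF UlX(1) Uc s iUlX smf_two_iso[OF F X V] iso_n])
    have ic: "iso D c" using assms(4) iUc smc.hom_Ar[OF sD c(1)] unfolding conservative_def by blast
    obtain kD where kD: "kD \<in> hom D ?I (cTen D X ?V)"
      "cComp D (cTenA D (cId D X) ?ev1) (cTenA D kD (cId D X)) = cId D X"
      "cComp D (cTenA D ?ev1 (cId D ?V)) (cTenA D (cId D ?V) kD) = cId D ?V"
      using smc.dual_from_c[OF sD X uX u1 c(1) c(2) ic] by blast
    show ?thesis using V ev1 kD by blast
  qed
  show ?thesis unfolding left_autonomous_def using sDm dualD by blast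
qed
end
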